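(* For each real number $\epsilon>0$ there is a positive integer $n$ and a subset $S\subseteq\mathbb{Z}/n\mathbb{Z}$ with $|S|\ge(1-\epsilon)n$ such that the congruence $abc\equiv d^2\pmod n$ has no solution with $a,b,c,d\in S$ (not necessarily distinct). *)

theory Defs
  imports Complex_Main "HOL-Number_Theory.Cong"
begin

end

theory Submission
  imports Defs "HOL-Computational_Algebra.Squarefree"
begin


lemma key_local:
  fixes p a b c d n :: nat
  assumes p: "prime p" and pn: "p^3 dvd n"
    and na: "\<not> p^2 dvd a" and nb: "\<not> p^2 dvd b" and nc: "\<not> p^2 dvd c" and nd: "\<not> p^2 dvd d"
    and cg: "[a * b * c = d\<^sup>2] (mod n)"
  shows "of_bool (p dvd a) + of_bool (p dvd b) + of_bool (p dvd c) = 2 * (of_bool (p dvd d) :: nat)"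
proof -
  have nz: "a \<noteq> 0" "b \<noteq> 0" "c \<noteq> 0" "d \<noteq> 0" using na nb nc nd by (metis dvd_0_right)+
  have pu: "\<not> is_unit p" using p by auto
  have m1: "multiplicity p x \<le> 1" if "x \<noteq> 0" "\<not> p^2 dvd x" for x
    using that power_dvd_iff_le_multiplicity[of x p 2] pu by auto
  have ind: "(of_bool (p dvd x) :: nat) = multiplicity p x" if "x \<noteq> 0" "\<not> p^2 dvd x" for x
    using m1[OF that] multiplicity_eq_zero_iff[of x p] that pu
    by (cases "multiplicity p x") auto
  have cg3: "[a*b*c = d\<^sup>2] (mod p^k)" if "k \<le> 3" for k
    using cong_dvd_modulus_nat[OF cg] pn that
    by (meson dvd_trans le_imp_power_dvd)
  have abcnz: "a*b*c \<noteq> 0" using nz by auto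
  have d2nz: "d^2 \<noteq> 0" using nz by auto
  have md2: "multiplicity p (d^2) = 2 * multiplicity p d"
    using prime_elem_multiplicity_power_distrib[of p d 2] p nz by auto
  have mabc: "multiplicity p (a*b*c) = multiplicity p a + multiplicity p b + multiplicity p c"
    using prime_elem_multiplicity_mult_distrib p nz by (simp add: prime_elem_multiplicity_mult_distrib)
  have le2: "multiplicity p (d^2) \<le> 2" using md2 m1[OF nz(4) nd] by simp
  have "multiplicity p (a*b*c) \<le> multiplicity p (d^2)"
  proof -
    have "\<not> p^3 dvd d^2" using le2 power_dvd_iff_le_multiplicity[OF d2nz pu, of 3] by simp
    hence "\<not> p^3 dvd a*b*c" using cong_dvd_iff[OF cg3[of 3]] by simp
    hence "multiplicity p (a*b*c) \<le> 2" using power_dvd_iff_le_multiplicity[OF abcnz pu, of 3] by simp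
    hence "p ^ multiplicity p (a*b*c) dvd d^2"
      using cong_dvd_iff[OF cg3[of "multiplicity p (a*b*c)"]] multiplicity_dvd by auto
    thus ?thesis using power_dvd_iff_le_multiplicity[OF d2nz pu] by simp
  qed
  moreover have "multiplicity p (d^2) \<le> multiplicity p (a*b*c)"
  proof -
    have "p ^ multiplicity p (d^2) dvd a*b*c"
      using cong_dvd_iff[OF cg3[of "multiplicity p (d^2)"]] multiplicity_dvd le2 by auto
    thus ?thesis using power_dvd_iff_le_multiplicity[OF abcnz pu] by simp
  qed
  ultimately have "multiplicity p a + multiplicity p b + multiplicity p c = 2 * multiplicity p d"
    using mabc md2 by simp
  thus ?thesis using ind[OF nz(1) na] ind[OF nz(2) nb] ind[OF nz(3) nc] ind[OF nz(4) nd] by simp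
qed



lemma card_multiples_le:
  fixes p N :: nat assumes "p > 0"
  shows "card {m\<in>{1..N}. p dvd m} \<le> N div p"
proof -
  have "{m\<in>{1..N}. p dvd m} \<subseteq> (\<lambda>k. p*k) ` {1..N div p}"
  proof
    fix m assume "m \<in> {m\<in>{1..N}. p dvd m}"
    then obtain k where k: "m = p*k" "1 \<le> m" "m \<le> N" by auto
    hence "k \<ge> 1" by (cases k) auto
    moreover have "k \<le> N div p" using k assms
      by (metis div_le_mono nonzero_mult_div_cancel_left not_gr0)
    ultimately show "m \<in> (\<lambda>k. p*k) ` {1..N div p}" using k by auto
  qed
  hence "card {m\<in>{1..N}. p dvd m} \<le> card ((\<lambda>k. p*k) ` {1..N div p})"
    by (intro card_mono) auto
  also have "\<dots> \<le> card {1..N div p}" by (rule card_image_le) auto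
  finally show ?thesis by simp
qed

lemma smooth_bound:
  fixes P N :: nat
  assumes "N \<le> (4^(P+1))^2"
  shows "card {m\<in>{1..N}. \<forall>q. prime q \<and> q dvd m \<longrightarrow> q \<le> P} \<le> 2^(P+1) * 4^(P+1)"
proof -
  let ?B = "{m\<in>{1..N}. \<forall>q. prime q \<and> q dvd m \<longrightarrow> q \<le> P}"
  let ?g = "\<lambda>m::nat. (prime_factors (squarefree_part m), square_part m)"
  have inj: "inj_on ?g ?B"
  proof
    fix x y assume x: "x \<in> ?B" and y: "y \<in> ?B" and e: "?g x = ?g y"
    have "squarefree_part x = squarefree_part y"
    proof (rule multiplicity_eq_nat)
      show "squarefree_part x > 0" "squarefree_part y > 0"
        by (metis squarefree_part_nonzero gr0I)+
      fix q :: nat assume q: "prime q"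
      have ux: "multiplicity q (squarefree_part x) \<le> 1" "multiplicity q (squarefree_part y) \<le> 1"
        using q by auto
      have "q \<in> prime_factors (squarefree_part x) \<longleftrightarrow> q \<in> prime_factors (squarefree_part y)"
        using e by simp
      hence "(multiplicity q (squarefree_part x) = 0) = (multiplicity q (squarefree_part y) = 0)"
        using q by (auto simp: prime_factors_multiplicity)
      thus "multiplicity q (squarefree_part x) = multiplicity q (squarefree_part y)"
        using ux by linarith
    qed
    thus "x = y" using e squarefree_decompose[of x] squarefree_decompose[of y] by auto
  qed
  have img: "?g ` ?B \<subseteq> Pow {..P} \<times> {1..(4::nat)^(P+1)}"
  proof
    fix z assume "z \<in> ?g ` ?B"
    then obtain m where m: "m \<in> ?B" "z = ?g m" by auto
    have m0: "m \<noteq> 0" using m by auto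
    have "prime_factors (squarefree_part m) \<subseteq> {..P}"
    proof
      fix q assume "q \<in> prime_factors (squarefree_part m)"
      hence "prime q" "q dvd squarefree_part m" by auto
      moreover have "squarefree_part m dvd m"
        by (metis dvd_triv_left squarefree_decompose)
      ultimately show "q \<in> {..P}" using m by (auto dest: dvd_trans)
    qed
    moreover have "square_part m \<ge> 1"
      using m0 square_part_0_iff[of m] by (metis less_one not_le)
    moreover have "square_part m \<le> 4^(P+1)"
    proof -
      have "square_part m ^ 2 \<le> m" using m0 square_part_square_dvd[of m] by (simp add: dvd_imp_le)
      also have "\<dots> \<le> (4^(P+1))^2" using m assms by auto
      finally show ?thesis by (rule power2_le_imp_le) simp
    qed
    ultimately show "z \<in> Pow {..P} \<times> {1..(4::nat)^(P+1)}" using m by auto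
  qed
  have "card ?B \<le> card (Pow {..P} \<times> {1..(4::nat)^(P+1)})"
    by (rule card_inj_on_le[OF inj img]) auto
  also have "\<dots> = 2^(P+1) * 4^(P+1)" by (simp add: card_cartesian_product card_Pow)
  finally show ?thesis .
qed

lemma erdos:
  fixes P :: nat
  shows "\<exists>X. (\<Sum>p\<in>{p. prime p \<and> P < p \<and> p \<le> X}. 1 / real p) \<ge> 1/2"
proof (rule ccontr)
  assume "\<not> ?thesis"
  hence H: "\<And>X. (\<Sum>p\<in>{p. prime p \<and> P < p \<and> p \<le> X}. 1 / real p) < 1/2" by (meson not_le)
  define N :: nat where "N = (4^(P+1))^2"
  define Q where "Q = {p. prime p \<and> P < p \<and> p \<le> N}"
  have fQ: "finite Q" unfolding Q_def by auto
  let ?A = "\<Union>p\<in>Q. {m\<in>{1..N}. p dvd m}"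
  let ?B = "{m\<in>{1..N}. \<forall>q. prime q \<and> q dvd m \<longrightarrow> q \<le> P}"
  have sub: "{1..N} \<subseteq> ?A \<union> ?B"
  proof
    fix m assume m: "m \<in> {1..N}"
    show "m \<in> ?A \<union> ?B"
    proof (cases "\<forall>q. prime q \<and> q dvd m \<longrightarrow> q \<le> P")
      case True thus ?thesis using m by auto
    next
      case False
      then obtain q where q: "prime q" "q dvd m" "\<not> q \<le> P" by auto
      have "q \<le> N" using q m by (auto dest: dvd_imp_le)
      thus ?thesis using q m unfolding Q_def by auto
    qed
  qed
  have "real (card ?A) \<le> real (\<Sum>p\<in>Q. card {m\<in>{1..N}. p dvd m})"
    using card_UN_le[OF fQ] of_nat_le_iff by blast
  also have "\<dots> \<le> (\<Sum>p\<in>Q. real N / real p)"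
    unfolding of_nat_sum
  proof (rule sum_mono)
    fix p assume "p \<in> Q"
    hence p0: "p > 0" unfolding Q_def using prime_gt_0_nat by auto
    have "real (card {m\<in>{1..N}. p dvd m}) \<le> real (N div p)"
      using card_multiples_le[OF p0] by simp
    also have "\<dots> \<le> real N / real p" by (simp add: of_nat_div_le_of_nat)
    finally show "real (card {m\<in>{1..N}. p dvd m}) \<le> real N / real p" .
  qed
  also have "\<dots> = real N * (\<Sum>p\<in>Q. 1 / real p)" by (simp add: sum_distrib_left)
  also have "\<dots> < real N * (1/2)"
  proof -
    have "N > 0" unfolding N_def by simp
    thus ?thesis using H[of N] unfolding Q_def by simp
  qed
  finally have cA: "real (card ?A) < real N / 2" by simp
  have "card ?B \<le> 2^(P+1) * 4^(P+1)" by (rule smooth_bound) (simp add: N_def)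
  moreover have "2 * (2^(P+1) * 4^(P+1)) \<le> N"
  proof -
    have "(2::nat) \<le> 2^(P+1)" by (simp add: self_le_power)
    hence "2 * (2^(P+1) * 4^(P+1)) \<le> 2^(P+1) * (2^(P+1) * (4::nat)^(P+1))" by simp
    also have "\<dots> = N" unfolding N_def
      by (simp add: power2_eq_square power_mult_distrib[symmetric] mult.assoc[symmetric])
    finally show ?thesis .
  qed
  ultimately have cB: "real (card ?B) \<le> real N / 2" by simp
  have "N = card {1..N}" by simp
  also have "\<dots> \<le> card (?A \<union> ?B)" using fQ by (intro card_mono[OF _ sub]) auto
  also have "\<dots> \<le> card ?A + card ?B" by (rule card_Un_le)
  finally have "real N \<le> real (card ?A) + real (card ?B)" by linarith
  with cA cB show False by linarith
qed



lemma card_filter_sum: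
  assumes "finite A"
  shows "real (card {x\<in>A. Q x}) = (\<Sum>x\<in>A. of_bool (Q x))"
proof -
  have "{x\<in>A. Q x} = A \<inter> {x. Q x}" by auto
  thus ?thesis using assms by simp
qed

lemma card_filter_sum_nat:
  assumes "finite A"
  shows "card {x\<in>A. Q x} = (\<Sum>x\<in>A. of_bool (Q x) :: nat)"
proof -
  have "{x\<in>A. Q x} = A \<inter> {x. Q x}" by auto
  thus ?thesis using assms by simp
qed

lemma card_multiples_eq:
  fixes d n :: nat assumes "d > 0" "d dvd n"
  shows "card {x\<in>{0..<n}. d dvd x} = n div d"
proof -
  have "{x\<in>{0..<n}. d dvd x} = (\<lambda>k. d*k) ` {0..<n div d}"
  proof
    show "{x\<in>{0..<n}. d dvd x} \<subseteq> (\<lambda>k. d*k) ` {0..<n div d}"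
    proof
      fix x assume "x \<in> {x\<in>{0..<n}. d dvd x}"
      then obtain k where k: "x = d*k" "d*k < n" by auto
      hence "k < n div d" using assms
        by (metis dvd_div_mult_self mult.commute mult_less_cancel1)
      thus "x \<in> (\<lambda>k. d*k) ` {0..<n div d}" using k by (intro image_eqI[of _ _ k]) auto
    qed
  next
    show "(\<lambda>k. d*k) ` {0..<n div d} \<subseteq> {x\<in>{0..<n}. d dvd x}"
    proof
      fix x assume "x \<in> (\<lambda>k. d*k) ` {0..<n div d}"
      then obtain k where k: "x = d*k" "k < n div d" by (meson atLeastLessThan_iff imageE)
      hence "d*k < n" using assms
        by (metis dvd_div_mult_self mult.commute mult_less_cancel1)
      thus "x \<in> {x\<in>{0..<n}. d dvd x}" using k by auto
    qed
  qed
  moreover have "inj_on (\<lambda>k. d*k) {0..<n div d}" using assms by (auto simp: inj_on_def)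
  ultimately show ?thesis by (simp add: card_image)
qed

lemma sum_inv_sq:
  fixes P X :: nat assumes "P \<ge> 1" "X \<ge> P"
  shows "(\<Sum>m\<in>{P<..X}. 1 / (real m)^2) \<le> 1 / real P - 1 / real X"
  using assms(2)
proof (induction X rule: dec_induct)
  case base thus ?case by simp
next
  case (step X)
  have X1: "real X \<ge> 1" using step assms by simp
  have e: "{P<..Suc X} = insert (Suc X) {P<..X}" using step by auto
  have "(\<Sum>m\<in>{P<..Suc X}. 1 / (real m)^2) = 1 / (real (Suc X))^2 + (\<Sum>m\<in>{P<..X}. 1 / (real m)^2)"
    unfolding e by (subst sum.insert) auto
  also have "\<dots> \<le> 1 / (real (Suc X))^2 + (1 / real P - 1 / real X)" using step by simp
  also have "\<dots> \<le> 1 / real P - 1 / real (Suc X)"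
  proof -
    have a: "1 / (real X + 1)^2 \<le> 1 / (real X * (real X + 1))"
      using X1 by (intro divide_left_mono) (auto simp: power2_eq_square)
    have b: "1 / real X - 1 / (real X + 1) = 1 / (real X * (real X + 1))"
      using X1 by (simp add: field_simps)
    have "1 / (real X + 1)^2 \<le> 1 / real X - 1 / (real X + 1)" using a b by simp
    moreover have "real (Suc X) = real X + 1" by simp
    ultimately show ?thesis by (simp only:)
  qed
  finally show ?case .
qed


lemma many_primes:
  fixes K :: nat
  shows "\<forall>P. \<exists>X\<ge>P. (\<Sum>p\<in>{p. prime p \<and> P < p \<and> p \<le> X}. 1 / real p) \<ge> real K / 2"
proof (induction K)
  case 0 show ?case
  proof
    fix P :: nat
    show "\<exists>X\<ge>P. (\<Sum>p\<in>{p. prime p \<and> P < p \<and> p \<le> X}. 1 / real p) \<ge> real 0 / 2"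
      by (rule exI[of _ P]) (auto intro!: sum_nonneg)
  qed
next
  case (Suc K)
  show ?case
  proof
    fix P
    obtain X where X: "X \<ge> P" "(\<Sum>p\<in>{p. prime p \<and> P < p \<and> p \<le> X}. 1 / real p) \<ge> real K / 2"
      using Suc.IH by blast
    obtain X' where X': "(\<Sum>p\<in>{p. prime p \<and> X < p \<and> p \<le> X'}. 1 / real p) \<ge> 1/2"
      using erdos[of X] by blast
    have XX: "X < X'"
    proof (rule ccontr)
      assume "\<not> X < X'"
      hence e: "{p. prime p \<and> X < p \<and> p \<le> X'} = {}" by auto
      show False using X' unfolding e by simp
    qed
    have u: "{p. prime p \<and> P < p \<and> p \<le> X'} = {p. prime p \<and> P < p \<and> p \<le> X} \<union> {p. prime p \<and> X < p \<and> p \<le> X'}"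
      using X XX by auto
    have f1: "finite {p. prime p \<and> P < p \<and> p \<le> X}" by (rule finite_subset[of _ "{..X}"]) auto
    have f2: "finite {p. prime p \<and> X < p \<and> p \<le> X'}" by (rule finite_subset[of _ "{..X'}"]) auto
    have "(\<Sum>p\<in>{p. prime p \<and> P < p \<and> p \<le> X'}. 1 / real p) =
          (\<Sum>p\<in>{p. prime p \<and> P < p \<and> p \<le> X}. 1 / real p) + (\<Sum>p\<in>{p. prime p \<and> X < p \<and> p \<le> X'}. 1 / real p)"
      unfolding u by (rule sum.union_disjoint[OF f1 f2]) auto
    also have "\<dots> \<ge> real (Suc K) / 2" using X X' by simp
    finally show "\<exists>X\<ge>P. (\<Sum>p\<in>{p. prime p \<and> P < p \<and> p \<le> X}. 1 / real p) \<ge> real (Suc K) / 2"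
      using X XX by (intro exI[of _ X']) auto
  qed
qed

theorem corollary3p2:
  fixes \<epsilon> :: real
  assumes "\<epsilon> > 0"
  shows "\<exists>(n::nat) S. n > 0 \<and> S \<subseteq> {0..<n} \<and> real (card S) \<ge> (1 - \<epsilon>) * real n \<and>
           (\<forall>a\<in>S. \<forall>b\<in>S. \<forall>c\<in>S. \<forall>d\<in>S. \<not> [a * b * c = d\<^sup>2] (mod n))"
proof -
  define P0 :: nat where "P0 = nat \<lceil>2/\<epsilon>\<rceil> + 1"
  define K :: nat where "K = nat \<lceil>144/\<epsilon>\<rceil>"
  obtain X where X: "X \<ge> P0" "(\<Sum>p\<in>{p. prime p \<and> P0 < p \<and> p \<le> X}. 1 / real p) \<ge> real K / 2"
    using many_primes[of K] by blast
  define Pr where "Pr = {p. prime p \<and> P0 < p \<and> p \<le> X}"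
  define \<mu> where "\<mu> = (\<Sum>p\<in>Pr. 1 / real p)"
  have fPr: "finite Pr" unfolding Pr_def by (rule finite_subset[of _ "{..X}"]) auto
  have Prp: "\<And>p. p \<in> Pr \<Longrightarrow> prime p" unfolding Pr_def by auto
  have Prpos: "\<And>p. p \<in> Pr \<Longrightarrow> p > 0" using Prp prime_gt_0_nat by blast
  have P0ge: "real P0 \<ge> 2/\<epsilon>" unfolding P0_def by linarith
  have P01: "P0 \<ge> 1" unfolding P0_def by simp
  have Kge: "real K \<ge> 144/\<epsilon>" unfolding K_def by linarith
  have \<mu>ge: "\<mu> \<ge> 72/\<epsilon>" using X(2) Kge unfolding \<mu>_def Pr_def by linarith
  have \<mu>pos: "\<mu> > 0" using \<mu>ge assms by (smt (verit) divide_pos_pos)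
  define M where "M = \<Prod>Pr"
  define n where "n = M^3"
  have Mpos: "M > 0" unfolding M_def using Prpos fPr by simp
  have npos: "n > 0" unfolding n_def using Mpos by simp
  have pM: "\<And>p. p \<in> Pr \<Longrightarrow> p dvd M" unfolding M_def using fPr by auto
  have p3n: "\<And>p. p \<in> Pr \<Longrightarrow> p^3 dvd n" unfolding n_def using pM by (simp add: dvd_power_same)
  have p2n: "p^2 dvd n" if "p \<in> Pr" for p
    using dvd_trans[OF le_imp_power_dvd[of 2 3 p] p3n[OF that]] by simp
  have pn: "p dvd n" if "p \<in> Pr" for p
    using dvd_trans[OF le_imp_power_dvd[of 1 3 p] p3n[OF that]] by simp
  have Mn: "M dvd n" unfolding n_def by (simp add: dvd_power)
  have pqn: "\<And>p q. p \<in> Pr \<Longrightarrow> q \<in> Pr \<Longrightarrow> p \<noteq> q \<Longrightarrow> p * q dvd n"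
  proof -
    fix p q assume pq: "p \<in> Pr" "q \<in> Pr" "p \<noteq> q"
    have "p * q dvd M" using divides_mult[OF pM[OF pq(1)] pM[OF pq(2)]] primes_coprime[OF Prp[OF pq(1)] Prp[OF pq(2)] pq(3)] by blast
    thus "p * q dvd n" using Mn dvd_trans by blast
  qed
  define Y where "Y x = card {p\<in>Pr. p dvd x}" for x
  define y where "y x = real (Y x)" for x
  have yeq: "y x = (\<Sum>p\<in>Pr. of_bool (p dvd x))" for x
    unfolding y_def Y_def by (rule card_filter_sum[OF fPr])
  define S where "S = {x\<in>{0..<n}. (\<forall>p\<in>Pr. \<not> p^2 dvd x) \<and> \<bar>y x - \<mu>\<bar> \<le> \<mu>/6}"
  have nosol: "\<forall>a\<in>S. \<forall>b\<in>S. \<forall>c\<in>S. \<forall>d\<in>S. \<not> [a * b * c = d\<^sup>2] (mod n)"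
  proof (intro ballI notI)
    fix a b c d assume abcd: "a \<in> S" "b \<in> S" "c \<in> S" "d \<in> S" and cg: "[a * b * c = d\<^sup>2] (mod n)"
    have "Y a + Y b + Y c = (\<Sum>p\<in>Pr. of_bool (p dvd a) + of_bool (p dvd b) + of_bool (p dvd c))"
      unfolding Y_def card_filter_sum_nat[OF fPr] by (simp add: sum.distrib)
    also have "\<dots> = (\<Sum>p\<in>Pr. 2 * of_bool (p dvd d))"
      by (rule sum.cong[OF refl], rule key_local[OF Prp p3n _ _ _ _ cg]) (use abcd in \<open>auto simp: S_def\<close>)
    also have "\<dots> = 2 * Y d" unfolding Y_def card_filter_sum_nat[OF fPr] by (simp add: sum_distrib_left)
    finally have "y a + y b + y c = 2 * y d" unfolding y_def by (metis of_nat_add of_nat_mult of_nat_numeral)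
    moreover have "\<bar>y a - \<mu>\<bar> \<le> \<mu>/6" "\<bar>y b - \<mu>\<bar> \<le> \<mu>/6" "\<bar>y c - \<mu>\<bar> \<le> \<mu>/6" "\<bar>y d - \<mu>\<bar> \<le> \<mu>/6"
      using abcd unfolding S_def by auto
    ultimately show False using \<mu>pos by linarith
  qed
  define B1 where "B1 = (\<Union>p\<in>Pr. {x\<in>{0..<n}. p^2 dvd x})"
  define B2 where "B2 = {x\<in>{0..<n}. \<bar>y x - \<mu>\<bar> > \<mu>/6}"
  have sub: "{0..<n} \<subseteq> S \<union> B1 \<union> B2" unfolding S_def B1_def B2_def by auto
  have fin: "finite S" "finite B1" "finite B2" unfolding S_def B1_def B2_def using fPr by auto
  have "n = card {0..<n}" by simp
  also have "\<dots> \<le> card (S \<union> B1 \<union> B2)" by (rule card_mono[OF _ sub]) (use fin in auto)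
  also have "\<dots> \<le> card S + card B1 + card B2" by (meson add_le_mono card_Un_le le_refl order_trans)
  finally have ncard: "real n \<le> real (card S) + real (card B1) + real (card B2)" by linarith
  have "real (card B1) \<le> real (\<Sum>p\<in>Pr. card {x\<in>{0..<n}. p^2 dvd x})"
    unfolding B1_def using card_UN_le[OF fPr] of_nat_le_iff by blast
  also have "\<dots> = (\<Sum>p\<in>Pr. real n * (1 / (real p)^2))"
    unfolding of_nat_sum
  proof (rule sum.cong[OF refl])
    fix p assume p: "p \<in> Pr"
    have "card {x\<in>{0..<n}. p^2 dvd x} = n div p^2" using card_multiples_eq p2n[OF p] Prpos[OF p] by simp
    thus "real (card {x\<in>{0..<n}. p^2 dvd x}) = real n * (1 / (real p)^2)"
      using real_of_nat_div[OF p2n[OF p]] by simp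
  qed
  also have "\<dots> = real n * (\<Sum>p\<in>Pr. 1 / (real p)^2)" by (simp add: sum_distrib_left)
  also have "\<dots> \<le> real n * (1 / real P0)"
  proof (rule mult_left_mono)
    have "(\<Sum>p\<in>Pr. 1 / (real p)^2) \<le> (\<Sum>m\<in>{P0<..X}. 1 / (real m)^2)"
      by (rule sum_mono2) (auto simp: Pr_def)
    also have "\<dots> \<le> 1 / real P0 - 1 / real X" by (rule sum_inv_sq[OF P01 X(1)])
    also have "\<dots> \<le> 1 / real P0" by simp
    finally show "(\<Sum>p\<in>Pr. 1 / (real p)^2) \<le> 1 / real P0" .
  qed simp
  also have "\<dots> \<le> real n * (\<epsilon>/2)"
  proof (rule mult_left_mono)
    have P0p: "0 < real P0" using P01 by simp
    have "1 / real P0 \<le> 1 / (2/\<epsilon>)" using P0ge assms P0p by (intro divide_left_mono) auto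
    thus "1 / real P0 \<le> \<epsilon>/2" by simp
  qed simp
  finally have cB1: "real (card B1) \<le> real n * (\<epsilon>/2)" .
  have S1: "(\<Sum>x\<in>{0..<n}. y x) = real n * \<mu>"
  proof -
    have "(\<Sum>x\<in>{0..<n}. y x) = (\<Sum>p\<in>Pr. \<Sum>x\<in>{0..<n}. of_bool (p dvd x))"
      unfolding yeq by (rule sum.swap)
    also have "\<dots> = (\<Sum>p\<in>Pr. real n * (1 / real p))"
    proof (rule sum.cong[OF refl])
      fix p assume p: "p \<in> Pr"
      have "(\<Sum>x\<in>{0..<n}. of_bool (p dvd x)) = real (card {x\<in>{0..<n}. p dvd x})"
        by (rule card_filter_sum[symmetric]) simp
      also have "\<dots> = real (n div p)" using card_multiples_eq[OF Prpos[OF p] pn[OF p]] by simp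
      also have "\<dots> = real n * (1 / real p)" using real_of_nat_div[OF pn[OF p]] by simp
      finally show "(\<Sum>x\<in>{0..<n}. of_bool (p dvd x)) = real n * (1 / real p)" .
    qed
    finally show ?thesis unfolding \<mu>_def by (simp add: sum_distrib_left)
  qed
  have pq_bound: "real (card {x\<in>{0..<n}. p dvd x \<and> q dvd x}) \<le> real n * (1 / real p) * (1 / real q) + (if p = q then real n * (1 / real p) else 0)"
    if p: "p \<in> Pr" and q: "q \<in> Pr" for p q
  proof (cases "p = q")
    case True
    have "real (card {x\<in>{0..<n}. p dvd x \<and> q dvd x}) = real (card {x\<in>{0..<n}. p dvd x})" using True by simp
    also have "\<dots> = real n * (1 / real p)" using card_multiples_eq[OF Prpos[OF p] pn[OF p]] real_of_nat_div[OF pn[OF p]] by simp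
    finally show ?thesis using True by simp
  next
    case False
    have e: "{x\<in>{0..<n}. p dvd x \<and> q dvd x} = {x\<in>{0..<n}. p * q dvd x}"
      using divides_mult primes_coprime[OF Prp[OF p] Prp[OF q] False]
      by (auto intro: dvd_mult_left dvd_mult_right)
    have "real (card {x\<in>{0..<n}. p * q dvd x}) = real (n div (p*q))"
      using card_multiples_eq[of "p*q" n] Prpos[OF p] Prpos[OF q] pqn[OF p q False] by simp
    also have "\<dots> = real n * (1 / real p) * (1 / real q)" using real_of_nat_div[OF pqn[OF p q False]] by simp
    finally show ?thesis using e False by simp
  qed
  have S2: "(\<Sum>x\<in>{0..<n}. (y x)^2) \<le> real n * \<mu>^2 + real n * \<mu>"
  proof -
    have "(\<Sum>x\<in>{0..<n}. (y x)^2) = (\<Sum>x\<in>{0..<n}. \<Sum>p\<in>Pr. \<Sum>q\<in>Pr. of_bool (p dvd x) * of_bool (q dvd x))"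
      unfolding yeq power2_eq_square sum_product ..
    also have "\<dots> = (\<Sum>p\<in>Pr. \<Sum>x\<in>{0..<n}. \<Sum>q\<in>Pr. of_bool (p dvd x) * of_bool (q dvd x))"
      by (rule sum.swap)
    also have "\<dots> = (\<Sum>p\<in>Pr. \<Sum>q\<in>Pr. \<Sum>x\<in>{0..<n}. of_bool (p dvd x) * of_bool (q dvd x))"
      by (rule sum.cong[OF refl], rule sum.swap)
    also have "\<dots> = (\<Sum>p\<in>Pr. \<Sum>q\<in>Pr. \<Sum>x\<in>{0..<n}. of_bool (p dvd x \<and> q dvd x))"
      by (intro sum.cong refl) simp
    also have "\<dots> = (\<Sum>p\<in>Pr. \<Sum>q\<in>Pr. real (card {x\<in>{0..<n}. p dvd x \<and> q dvd x}))"
      by (intro sum.cong refl card_filter_sum[symmetric]) simp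
    also have "\<dots> \<le> (\<Sum>p\<in>Pr. \<Sum>q\<in>Pr. real n * (1 / real p) * (1 / real q) + (if p = q then real n * (1 / real p) else 0))"
      by (intro sum_mono pq_bound)
    also have "\<dots> = (\<Sum>p\<in>Pr. \<Sum>q\<in>Pr. real n * (1 / real p) * (1 / real q)) + (\<Sum>p\<in>Pr. real n * (1 / real p))"
      using fPr by (simp add: sum.distrib)
    also have "\<dots> = real n * \<mu>^2 + real n * \<mu>"
    proof -
      have mu: "(\<Sum>p\<in>Pr. 1 / real p) = \<mu>" unfolding \<mu>_def ..
      have e1: "(\<Sum>q\<in>Pr. real n * (1 / real p) * (1 / real q)) = real n * (1 / real p) * \<mu>" for p
        unfolding mu[symmetric] by (simp add: sum_distrib_left)
      have e2: "(\<Sum>p\<in>Pr. real n * (1 / real p) * \<mu>) = (\<Sum>p\<in>Pr. 1 / real p) * (real n * \<mu>)"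
        by (subst sum_distrib_right, rule sum.cong[OF refl]) simp
      have e3: "(\<Sum>p\<in>Pr. real n * (1 / real p)) = real n * (\<Sum>p\<in>Pr. 1 / real p)"
        by (simp add: sum_distrib_left)
      show ?thesis unfolding e1 e2 e3 mu by (simp add: power2_eq_square)
    qed
    finally show ?thesis .
  qed
  define V where "V = (\<Sum>x\<in>{0..<n}. (y x - \<mu>)^2)"
  have "V = (\<Sum>x\<in>{0..<n}. (y x)^2) - 2 * \<mu> * (\<Sum>x\<in>{0..<n}. y x) + real n * \<mu>^2"
    unfolding V_def power2_diff by (simp add: sum.distrib sum_subtractf sum_distrib_left mult_ac)
  hence Vle: "V \<le> real n * \<mu>" using S1 S2 by (simp add: power2_eq_square mult_ac)
  have "real (card B2) * (\<mu>/6)^2 = (\<Sum>x\<in>B2. (\<mu>/6)^2)" by simp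
  also have "\<dots> \<le> (\<Sum>x\<in>B2. (y x - \<mu>)^2)"
  proof (rule sum_mono)
    fix x assume "x \<in> B2"
    hence "\<mu>/6 \<le> \<bar>y x - \<mu>\<bar>" unfolding B2_def by auto
    hence "(\<mu>/6)^2 \<le> \<bar>y x - \<mu>\<bar>^2" using \<mu>pos by (intro power_mono) auto
    thus "(\<mu>/6)^2 \<le> (y x - \<mu>)^2" by simp
  qed
  also have "\<dots> \<le> V" unfolding V_def by (rule sum_mono2) (auto simp: B2_def)
  finally have "real (card B2) * (\<mu>/6)^2 \<le> real n * \<mu>" using Vle by linarith
  hence "real (card B2) \<le> real n * \<mu> / (\<mu>/6)^2" using \<mu>pos by (simp add: field_simps)
  also have "\<dots> = 36 * real n / \<mu>" using \<mu>pos by (simp add: field_simps power2_eq_square)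
  also have "\<dots> \<le> real n * (\<epsilon>/2)"
  proof -
    have "36 / \<mu> \<le> \<epsilon>/2" using \<mu>ge \<mu>pos assms by (simp add: field_simps)
    hence "real n * (36 / \<mu>) \<le> real n * (\<epsilon>/2)" by (intro mult_left_mono) auto
    thus ?thesis by simp
  qed
  finally have cB2: "real (card B2) \<le> real n * (\<epsilon>/2)" .
  have "real (card S) \<ge> (1 - \<epsilon>) * real n" using ncard cB1 cB2 by (simp add: algebra_simps)
  moreover have "S \<subseteq> {0..<n}" unfolding S_def by auto
  ultimately show ?thesis using npos nosol by blast
qed

end
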